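(* Let $(\mathfrak g,\Delta)$ be a quasitriangular Hom-Lie bialgebra, where $(\mathfrak{g},[\cdot,\cdot]_{\mathfrak{g}},\phi_{\mathfrak{g}})$ is finite-dimensional and $\Delta(x)=(\mathrm{ad}_x\otimes\phi_{\mathfrak g}+\phi_{\mathfrak g}\otimes\mathrm{ad}_x)r$ for a solution $r$ of the classical Hom-Yang-Baxter equation with $(\phi_{\mathfrak g}\otimes\mathrm{Id})r=(\mathrm{Id}\otimes\phi_{\mathfrak g})r$. Then $r^\sharp\phi_{\mathfrak g}^*:\mathfrak g^*\to\mathfrak g$ is a homomorphism of Hom-Lie algebras from $(\mathfrak g^*,[\cdot,\cdot]_{\mathfrak g^*},\phi_{\mathfrak g}^* )$ to $(\mathfrak{g},[\cdot,\cdot]_{\mathfrak{g}},\phi_{\mathfrak{g}})$, where $\langle[a,b]_{\mathfrak g^*},x\rangle=\langle\Delta(x),a\otimes b\rangle$.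
   Context: A Hom-Lie algebra $(\mathfrak{h},[\cdot,\cdot]_{\mathfrak{h}},\phi_{\mathfrak{h}})$: skew-symmetric bilinear bracket and linear map with $\phi_{\mathfrak h}[x,y]=[\phi_{\mathfrak h}x,\phi_{\mathfrak h}y]$ and $[\phi_{\mathfrak h}(x),[y,z]]+[\phi_{\mathfrak h}(y),[z,x]]+[\phi_{\mathfrak h}(z),[x,y]]=0$; weakly involutive if $[\phi_{\mathfrak h}^2(x),y]=[x,y]$. A homomorphism $f:\mathfrak h\to\mathfrak k$ of Hom-Lie algebras satisfies $f[x,y]=[f(x),f(y)]$ and $f\phi_{\mathfrak h}=\phi_{\mathfrak k}f$. $\mathrm{ad}_xy=[x,y]$; for $t\in\mathfrak g\otimes\mathfrak g$, $\mathrm{ad}_zt=(\mathrm{ad}_z\otimes\phi_{\mathfrak g}+\phi_{\mathfrak g}\otimes\mathrm{ad}_z)t$. $r^\sharp:\mathfrak g^*\to\mathfrak g$, $\langle r^\sharp(a),b\rangle=\langle r,a\otimes b\rangle$. For $r=\sum_ix_i\otimes y_i$, $[r,r]_{\mathfrak g}=\sum_{i,j}([x_i,x_j]\otimes\phi_{\mathfrak g}(y_i)\otimes\phi_{\mathfrak g}(y_j)+\phi_{\mathfrak g}(x_i)\otimes[y_i,x_j]\otimes\phi_{\mathfrak g}(y_j)+\phi_{\mathfrak g}(x_i)\otimes\phi_{\mathfrak g}(x_j)\otimes[y_i,y_j])$; the classical Hom-Yang-Baxter equation is $[r,r]_{\mathfrak g}=0$. A Hom-Lie bialgebra $(\mathfrak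 g,\Delta)$: weakly involutive $\mathfrak g$ and $\Delta:\mathfrak g\to\mathfrak g\otimes\mathfrak g$ such that $(\mathfrak g^*,[\cdot,\cdot]_{\mathfrak g^*},\phi_{\mathfrak g}^* )$ with $\langle[a,b]_{\mathfrak g^*},x\rangle=\langle\Delta(x),a\otimes b\rangle$ is a weakly involutive Hom-Lie algebra and $\Delta[x,y]=\mathrm{ad}_{\phi_{\mathfrak g}(x)}\Delta(y)-\mathrm{ad}_{\phi_{\mathfrak g}(y)}\Delta(x)$. It is coboundary if $\Delta(x)=\mathrm{ad}_xr$ with $(\phi_{\mathfrak g}\otimes\mathrm{Id})r=(\mathrm{Id}\otimes\phi_{\mathfrak g})r$, and quasitriangular if moreover $r$ solves the classical Hom-Yang-Baxter equation. *)

theory Defs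
  imports Main "HOL-Library.Function_Algebras"
begin

text \<open>A finite-dimensional vector space over a field 'a is represented in coordinates as
  'n \<Rightarrow> 'a with 'n a finite index type (a basis).  The dual space is represented by the
  same type via the dual basis, with pairing pair a x = sum of a i * x i.  The tensor square
  g (x) g is represented as 'n \<Rightarrow> 'n \<Rightarrow> 'a (coefficients w.r.t. e_i (x) e_j), and the
  triple tensor power as 'n \<Rightarrow> 'n \<Rightarrow> 'n \<Rightarrow> 'a.\<close>

type_synonym ('n,'a) vec = "'n \<Rightarrow> 'a"
type_synonym ('n,'a) ten2 = "'n \<Rightarrow> 'n \<Rightarrow> 'a"
type_synonym ('n,'a) ten3 = "'n \<Rightarrow> 'n \<Rightarrow> 'n \<Rightarrow> 'a"

definition smul :: "'a::field \<Rightarrow> ('n,'a) vec \<Rightarrow> ('n,'a) vec" where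
  "smul c x = (\<lambda>i. c * x i)"

definition bvec :: "'n \<Rightarrow> ('n,'a::field) vec" where
  "bvec i = (\<lambda>j. if j = i then 1 else 0)"

definition pair :: "('n::finite,'a::field) vec \<Rightarrow> ('n,'a) vec \<Rightarrow> 'a" where
  "pair a x = (\<Sum>i\<in>UNIV. a i * x i)"

definition lin :: "(('n,'a::field) vec \<Rightarrow> ('m,'a) vec) \<Rightarrow> bool" where
  "lin f \<longleftrightarrow> (\<forall>x y. f (x + y) = f x + f y) \<and> (\<forall>c x. f (smul c x) = smul c (f x))"

definition bilin :: "(('n,'a::field) vec \<Rightarrow> ('n,'a) vec \<Rightarrow> ('n,'a) vec) \<Rightarrow> bool" where
  "bilin br \<longleftrightarrow> (\<forall>x. lin (br x)) \<and> (\<forall>y. lin (\<lambda>x. br x y))"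

definition hom_lie :: "(('n,'a::field) vec \<Rightarrow> ('n,'a) vec \<Rightarrow> ('n,'a) vec)
    \<Rightarrow> (('n,'a) vec \<Rightarrow> ('n,'a) vec) \<Rightarrow> bool" where
  "hom_lie br phi \<longleftrightarrow> bilin br \<and> lin phi
     \<and> (\<forall>x y. br x y = - br y x)
     \<and> (\<forall>x y. phi (br x y) = br (phi x) (phi y))
     \<and> (\<forall>x y z. br (phi x) (br y z) + br (phi y) (br z x) + br (phi z) (br x y) = 0)"

definition weakly_involutive :: "(('n,'a::field) vec \<Rightarrow> ('n,'a) vec \<Rightarrow> ('n,'a) vec)
    \<Rightarrow> (('n,'a) vec \<Rightarrow> ('n,'a) vec) \<Rightarrow> bool" where
  "weakly_involutive br phi \<longleftrightarrow> hom_lie br phi \<and> (\<forall>x y. br (phi (phi x)) y = br x y)"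

definition hom_lie_hom :: "(('n,'a::field) vec \<Rightarrow> ('n,'a) vec \<Rightarrow> ('n,'a) vec)
    \<Rightarrow> (('n,'a) vec \<Rightarrow> ('n,'a) vec)
    \<Rightarrow> (('m,'a) vec \<Rightarrow> ('m,'a) vec \<Rightarrow> ('m,'a) vec)
    \<Rightarrow> (('m,'a) vec \<Rightarrow> ('m,'a) vec)
    \<Rightarrow> (('n,'a) vec \<Rightarrow> ('m,'a) vec) \<Rightarrow> bool" where
  "hom_lie_hom br1 phi1 br2 phi2 f \<longleftrightarrow>
     (\<forall>x y. f (br1 x y) = br2 (f x) (f y)) \<and> (\<forall>x. f (phi1 x) = phi2 (f x))"

definition tens :: "('n,'a::field) vec \<Rightarrow> ('n,'a) vec \<Rightarrow> ('n,'a) ten2" where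
  "tens x y = (\<lambda>i j. x i * y j)"

definition tens3 :: "('n,'a::field) vec \<Rightarrow> ('n,'a) vec \<Rightarrow> ('n,'a) vec \<Rightarrow> ('n,'a) ten3" where
  "tens3 x y z = (\<lambda>i j k. x i * y j * z k)"

definition tmap :: "(('n::finite,'a::field) vec \<Rightarrow> ('n,'a) vec) \<Rightarrow> (('n,'a) vec \<Rightarrow> ('n,'a) vec)
    \<Rightarrow> ('n,'a) ten2 \<Rightarrow> ('n,'a) ten2" where
  "tmap f g t = (\<Sum>i\<in>UNIV. \<Sum>j\<in>UNIV. (\<lambda>k l. t i j * (tens (f (bvec i)) (g (bvec j))) k l))"

definition ad2 :: "(('n::finite,'a::field) vec \<Rightarrow> ('n,'a) vec \<Rightarrow> ('n,'a) vec)
    \<Rightarrow> (('n,'a) vec \<Rightarrow> ('n,'a) vec) \<Rightarrow> ('n,'a) vec \<Rightarrow> ('n,'a) ten2 \<Rightarrow> ('n,'a) ten2" where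
  "ad2 br phi z t = tmap (br z) phi t + tmap phi (br z) t"

definition pair2 :: "('n::finite,'a::field) ten2 \<Rightarrow> ('n,'a) vec \<Rightarrow> ('n,'a) vec \<Rightarrow> 'a" where
  "pair2 t a b = (\<Sum>i\<in>UNIV. \<Sum>j\<in>UNIV. t i j * a i * b j)"

text \<open>Dual bracket: <[a,b]_{g*}, x> = <Delta x, a (x) b>, in dual-basis coordinates.\<close>
definition dual_br :: "(('n::finite,'a::field) vec \<Rightarrow> ('n,'a) ten2)
    \<Rightarrow> ('n,'a) vec \<Rightarrow> ('n,'a) vec \<Rightarrow> ('n,'a) vec" where
  "dual_br Delta a b = (\<lambda>j. pair2 (Delta (bvec j)) a b)"

text \<open>Dual map phi*: <phi* a, x> = <a, phi x>.\<close>
definition dual_map :: "(('n::finite,'a::field) vec \<Rightarrow> ('n,'a) vec) \<Rightarrow> ('n,'a) vec \<Rightarrow> ('n,'a) vec" where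
  "dual_map phi a = (\<lambda>j. pair a (phi (bvec j)))"

text \<open>r-sharp: <r#(a), b> = <r, a (x) b>.\<close>
definition rsharp :: "('n::finite,'a::field) ten2 \<Rightarrow> ('n,'a) vec \<Rightarrow> ('n,'a) vec" where
  "rsharp r a = (\<lambda>j. \<Sum>i\<in>UNIV. r i j * a i)"

definition rr :: "(('n::finite,'a::field) vec \<Rightarrow> ('n,'a) vec \<Rightarrow> ('n,'a) vec)
    \<Rightarrow> (('n,'a) vec \<Rightarrow> ('n,'a) vec) \<Rightarrow> ('n,'a) ten2 \<Rightarrow> ('n,'a) ten3" where
  "rr br phi r = (\<Sum>i\<in>UNIV. \<Sum>j\<in>UNIV. \<Sum>k\<in>UNIV. \<Sum>l\<in>UNIV.
      (\<lambda>p q s. r i j * r k l *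
        (tens3 (br (bvec i) (bvec k)) (phi (bvec j)) (phi (bvec l)) p q s
       + tens3 (phi (bvec i)) (br (bvec j) (bvec k)) (phi (bvec l)) p q s
       + tens3 (phi (bvec i)) (phi (bvec k)) (br (bvec j) (bvec l)) p q s)))"

definition CHYBE :: "(('n::finite,'a::field) vec \<Rightarrow> ('n,'a) vec \<Rightarrow> ('n,'a) vec)
    \<Rightarrow> (('n,'a) vec \<Rightarrow> ('n,'a) vec) \<Rightarrow> ('n,'a) ten2 \<Rightarrow> bool" where
  "CHYBE br phi r \<longleftrightarrow> rr br phi r = 0"

definition hom_lie_bialgebra :: "(('n::finite,'a::field) vec \<Rightarrow> ('n,'a) vec \<Rightarrow> ('n,'a) vec)
    \<Rightarrow> (('n,'a) vec \<Rightarrow> ('n,'a) vec) \<Rightarrow> (('n,'a) vec \<Rightarrow> ('n,'a) ten2) \<Rightarrow> bool" where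
  "hom_lie_bialgebra br phi Delta \<longleftrightarrow>
     weakly_involutive br phi
     \<and> weakly_involutive (dual_br Delta) (dual_map phi)
     \<and> (\<forall>x y. Delta (br x y) = ad2 br phi (phi x) (Delta y) - ad2 br phi (phi y) (Delta x))"

definition coboundary_by :: "(('n::finite,'a::field) vec \<Rightarrow> ('n,'a) vec \<Rightarrow> ('n,'a) vec)
    \<Rightarrow> (('n,'a) vec \<Rightarrow> ('n,'a) vec) \<Rightarrow> (('n,'a) vec \<Rightarrow> ('n,'a) ten2) \<Rightarrow> ('n,'a) ten2 \<Rightarrow> bool" where
  "coboundary_by br phi Delta r \<longleftrightarrow> hom_lie_bialgebra br phi Delta
     \<and> (\<forall>x. Delta x = ad2 br phi x r) \<and> tmap phi id r = tmap id phi r"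

definition quasitriangular_by :: "(('n::finite,'a::field) vec \<Rightarrow> ('n,'a) vec \<Rightarrow> ('n,'a) vec)
    \<Rightarrow> (('n,'a) vec \<Rightarrow> ('n,'a) vec) \<Rightarrow> (('n,'a) vec \<Rightarrow> ('n,'a) ten2) \<Rightarrow> ('n,'a) ten2 \<Rightarrow> bool" where
  "quasitriangular_by br phi Delta r \<longleftrightarrow> coboundary_by br phi Delta r \<and> CHYBE br phi r"

end

theory Submission imports Defs begin

lemma sum_fun_apply: "(sum F A) x = sum (\<lambda>i. F i x) A"
  by (induction A rule: infinite_finite_induct) auto

lemma sum_delta_r: "(\<Sum>i\<in>(UNIV::'b::finite set). f i * (if x = i then 1 else 0)) = (f x :: 'a::semiring_1)"
proof -
  have "(\<Sum>i\<in>UNIV. f i * (if x = i then 1 else 0)) = (\<Sum>i\<in>UNIV. if x = i then f i else 0)"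
    by (rule sum.cong) auto
  thus ?thesis by simp
qed

lemma sum_delta_r': "(\<Sum>i\<in>(UNIV::'b::finite set). f i * (if i = x then 1 else 0)) = (f x :: 'a::semiring_1)"
proof -
  have "(\<Sum>i\<in>UNIV. f i * (if i = x then 1 else 0)) = (\<Sum>i\<in>UNIV. if x = i then f i else 0)"
    by (rule sum.cong) auto
  thus ?thesis by simp
qed

lemma smul_zero: "smul 0 y = 0"
  by (simp add: smul_def zero_fun_def)

lemma lin_zero: "lin f \<Longrightarrow> f 0 = 0"
proof -
  assume l: "lin f"
  have "f 0 = f (smul 0 0)" by (simp add: smul_zero)
  also have "\<dots> = smul 0 (f 0)" using l by (simp add: lin_def)
  finally show ?thesis by (simp add: smul_zero)
qed

lemma lin_sum: "lin f \<Longrightarrow> f (sum F A) = sum (\<lambda>i. f (F i)) A"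
  by (induction A rule: infinite_finite_induct) (auto simp: lin_zero lin_def)

lemma vec_decomp: "(v::('n::finite,'a::field) vec) = (\<Sum>j\<in>UNIV. smul (v j) (bvec j))"
  by (rule ext) (simp add: sum_fun_apply smul_def bvec_def sum_delta_r)

lemma lin_coord: "lin f \<Longrightarrow> f (v::('n::finite,'a::field) vec) = (\<lambda>p. \<Sum>j\<in>UNIV. v j * f (bvec j) p)"
proof -
  assume l: "lin f"
  have "f v = f (\<Sum>j\<in>UNIV. smul (v j) (bvec j))" by (subst vec_decomp) simp
  also have "\<dots> = (\<Sum>j\<in>UNIV. smul (v j) (f (bvec j)))" using l by (simp add: lin_sum lin_def)
  finally show ?thesis by (simp add: sum_fun_apply smul_def fun_eq_iff)
qed

lemma bilin_coord: "bilin br \<Longrightarrow> br (u::('n::finite,'a::field) vec) v = (\<lambda>p. \<Sum>i\<in>UNIV. \<Sum>k\<in>UNIV. u i * v k * br (bvec i) (bvec k) p)"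
proof -
  assume b: "bilin br"
  have "br u v = (\<lambda>p. \<Sum>i\<in>UNIV. u i * br (bvec i) v p)"
    using b lin_coord[of "\<lambda>x. br x v" u] by (simp add: bilin_def)
  also have "\<dots> = (\<lambda>p. \<Sum>i\<in>UNIV. \<Sum>k\<in>UNIV. u i * v k * br (bvec i) (bvec k) p)"
    using b lin_coord[of "br (bvec _)" v] by (simp add: bilin_def sum_distrib_left mult.assoc)
  finally show ?thesis .
qed

lemma if_mult0_r: "(x::'a::semiring_0) * (if P then y else 0) = (if P then x * y else 0)" by simp
lemma if_mult0_l: "(if P then y else 0) * (x::'a::semiring_0) = (if P then y * x else 0)" by simp

lemma sum_if_const: "(\<Sum>j\<in>A. if P then f j else 0) = (if P then (\<Sum>j\<in>A. f j) else 0)"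
  by simp

lemma s12: "(\<Sum>u\<in>U. \<Sum>i\<in>I. \<Sum>j\<in>J. F u i j) = (\<Sum>i\<in>I. \<Sum>j\<in>J. \<Sum>u\<in>U. F u i j)"
proof -
  have "(\<Sum>u\<in>U. \<Sum>i\<in>I. \<Sum>j\<in>J. F u i j) = (\<Sum>i\<in>I. \<Sum>u\<in>U. \<Sum>j\<in>J. F u i j)" by (rule sum.swap)
  also have "\<dots> = (\<Sum>i\<in>I. \<Sum>j\<in>J. \<Sum>u\<in>U. F u i j)" by (rule sum.cong[OF refl], rule sum.swap)
  finally show ?thesis .
qed

lemma s14: "(\<Sum>u\<in>U. \<Sum>i\<in>I. \<Sum>j\<in>J. \<Sum>k\<in>K. \<Sum>l\<in>L. F u i j k l) = (\<Sum>i\<in>I. \<Sum>j\<in>J. \<Sum>k\<in>K. \<Sum>l\<in>L. \<Sum>u\<in>U. F u i j k l)"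
proof -
  have "(\<Sum>u\<in>U. \<Sum>i\<in>I. \<Sum>j\<in>J. \<Sum>k\<in>K. \<Sum>l\<in>L. F u i j k l) = (\<Sum>i\<in>I. \<Sum>j\<in>J. \<Sum>u\<in>U. \<Sum>k\<in>K. \<Sum>l\<in>L. F u i j k l)" by (rule s12)
  also have "\<dots> = (\<Sum>i\<in>I. \<Sum>j\<in>J. \<Sum>k\<in>K. \<Sum>l\<in>L. \<Sum>u\<in>U. F u i j k l)"
    by (rule sum.cong[OF refl], rule sum.cong[OF refl], rule s12)
  finally show ?thesis .
qed

lemma rev3: "(\<Sum>i\<in>I. \<Sum>p\<in>P. \<Sum>q\<in>Q. F i p q) = (\<Sum>q\<in>Q. \<Sum>p\<in>P. \<Sum>i\<in>I. F i p q)"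
proof -
  have "(\<Sum>i\<in>I. \<Sum>p\<in>P. \<Sum>q\<in>Q. F i p q) = (\<Sum>p\<in>P. \<Sum>q\<in>Q. \<Sum>i\<in>I. F i p q)"
    by (rule s12)
  also have "\<dots> = (\<Sum>q\<in>Q. \<Sum>p\<in>P. \<Sum>i\<in>I. F i p q)" by (rule sum.swap)
  finally show ?thesis .
qed

lemma perm4a: "(\<Sum>x\<in>X. \<Sum>y\<in>Y. \<Sum>i\<in>I. \<Sum>k\<in>K. F x y i k) = (\<Sum>i\<in>I. \<Sum>x\<in>X. \<Sum>k\<in>K. \<Sum>y\<in>Y. F x y i k)"
proof -
  have "(\<Sum>x\<in>X. \<Sum>y\<in>Y. \<Sum>i\<in>I. \<Sum>k\<in>K. F x y i k) = (\<Sum>x\<in>X. \<Sum>i\<in>I. \<Sum>y\<in>Y. \<Sum>k\<in>K. F x y i k)"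
    by (rule sum.cong[OF refl], rule sum.swap)
  also have "\<dots> = (\<Sum>i\<in>I. \<Sum>x\<in>X. \<Sum>y\<in>Y. \<Sum>k\<in>K. F x y i k)" by (rule sum.swap)
  also have "\<dots> = (\<Sum>i\<in>I. \<Sum>x\<in>X. \<Sum>k\<in>K. \<Sum>y\<in>Y. F x y i k)"
    by (rule sum.cong[OF refl], rule sum.cong[OF refl], rule sum.swap)
  finally show ?thesis .
qed

lemma swap22: "(\<Sum>u\<in>U. \<Sum>v\<in>V. \<Sum>i\<in>I. \<Sum>j\<in>J. F u v i j) = (\<Sum>i\<in>I. \<Sum>j\<in>J. \<Sum>u\<in>U. \<Sum>v\<in>V. F u v i j)"
proof -
  have "(\<Sum>u\<in>U. \<Sum>v\<in>V. \<Sum>i\<in>I. \<Sum>j\<in>J. F u v i j) = (\<Sum>u\<in>U. \<Sum>i\<in>I. \<Sum>j\<in>J. \<Sum>v\<in>V. F u v i j)"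
    by (rule sum.cong[OF refl], rule s12)
  also have "\<dots> = (\<Sum>i\<in>I. \<Sum>j\<in>J. \<Sum>u\<in>U. \<Sum>v\<in>V. F u v i j)" by (rule s12)
  finally show ?thesis .
qed

lemma swap24: "(\<Sum>p\<in>P. \<Sum>q\<in>Q. \<Sum>i\<in>I. \<Sum>j\<in>J. \<Sum>k\<in>K. \<Sum>l\<in>L. F p q i j k l) = (\<Sum>i\<in>I. \<Sum>j\<in>J. \<Sum>k\<in>K. \<Sum>l\<in>L. \<Sum>p\<in>P. \<Sum>q\<in>Q. F p q i j k l)"
proof -
  have "(\<Sum>p\<in>P. \<Sum>q\<in>Q. \<Sum>i\<in>I. \<Sum>j\<in>J. \<Sum>k\<in>K. \<Sum>l\<in>L. F p q i j k l) = (\<Sum>p\<in>P. \<Sum>i\<in>I. \<Sum>j\<in>J. \<Sum>k\<in>K. \<Sum>l\<in>L. \<Sum>q\<in>Q. F p q i j k l)"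
    by (rule sum.cong[OF refl], rule s14)
  also have "\<dots> = (\<Sum>i\<in>I. \<Sum>j\<in>J. \<Sum>k\<in>K. \<Sum>l\<in>L. \<Sum>p\<in>P. \<Sum>q\<in>Q. F p q i j k l)" by (rule s14)
  finally show ?thesis .
qed

lemma G1: "(\<Sum>p\<in>P. \<Sum>q\<in>Q. (a p::'a::comm_semiring_1) * b q * (\<Sum>i\<in>I. \<Sum>j\<in>J. \<Sum>k\<in>K. \<Sum>l\<in>L. c i j k l * M i j k l p q))
   = (\<Sum>i\<in>I. \<Sum>j\<in>J. \<Sum>k\<in>K. \<Sum>l\<in>L. c i j k l * (\<Sum>p\<in>P. \<Sum>q\<in>Q. a p * b q * M i j k l p q))"
  by (simp only: sum_distrib_left mult_ac, rule swap24)

theorem corollary4p10: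
  fixes br :: "('n::finite, 'a::field) vec \<Rightarrow> ('n,'a) vec \<Rightarrow> ('n,'a) vec"
    and phi :: "('n,'a) vec \<Rightarrow> ('n,'a) vec"
    and Delta :: "('n,'a) vec \<Rightarrow> ('n,'a) ten2"
    and r :: "('n,'a) ten2"
  assumes "quasitriangular_by br phi Delta r"
  shows "hom_lie_hom (dual_br Delta) (dual_map phi) br phi (rsharp r \<circ> dual_map phi)"
proof -
  note qb = assms[unfolded quasitriangular_by_def]
  note cb = qb[THEN conjunct1, unfolded coboundary_by_def]
  note hb = cb[THEN conjunct1, unfolded hom_lie_bialgebra_def]
  note hl = hb[THEN conjunct1, unfolded weakly_involutive_def, THEN conjunct1, unfolded hom_lie_def]
  have bl: "bilin br" by (rule hl[THEN conjunct1])
  have lp: "lin phi" by (rule hl[THEN conjunct2, THEN conjunct1])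
  have sk: "\<And>x y. br x y = - br y x" using hl[THEN conjunct2, THEN conjunct2, THEN conjunct1] by blast
  have Dl: "\<And>x. Delta x = ad2 br phi x r" using cb[THEN conjunct2, THEN conjunct1] by blast
  have tm: "tmap phi id r = tmap id phi r" by (rule cb[THEN conjunct2, THEN conjunct2])
  have ch: "rr br phi r = 0" by (rule qb[THEN conjunct2, unfolded CHYBE_def])
  define \<Phi> where "\<Phi> = (\<lambda>k i. phi (bvec i) k)"
  define C where "C = (\<lambda>i k p. br (bvec i) (bvec k) p)"
  have \<Phi>e: "\<And>i k. phi (bvec i) k = \<Phi> k i" by (simp add: \<Phi>_def)
  have Ce: "\<And>i k p. br (bvec i) (bvec k) p = C i k p" by (simp add: C_def)
  have phic: "\<And>v p. phi v p = (\<Sum>j\<in>UNIV. v j * \<Phi> p j)"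
    unfolding \<Phi>_def by (subst lin_coord[OF lp]) (rule refl)
  have brc: "\<And>u v p. br u v p = (\<Sum>i\<in>UNIV. \<Sum>k\<in>UNIV. u i * v k * C i k p)"
    unfolding C_def by (subst bilin_coord[OF bl]) (rule refl)
  have skC: "\<And>i k p. C i k p = - C k i p"
    unfolding C_def by (subst sk) simp
  have P: "\<And>k l. (\<Sum>i\<in>UNIV. r i l * \<Phi> k i) = (\<Sum>j\<in>UNIV. r k j * \<Phi> l j)"
  proof -
    fix k l
    have "tmap phi id r k l = tmap id phi r k l" using tm by simp
    thus "(\<Sum>i\<in>UNIV. r i l * \<Phi> k i) = (\<Sum>j\<in>UNIV. r k j * \<Phi> l j)"
      apply (simp add: tmap_def tens_def sum_fun_apply \<Phi>e)
      apply (simp add: bvec_def if_mult0_l if_mult0_r sum_if_const)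
      done
  qed
  have CH: "\<And>p q s. (\<Sum>i\<in>UNIV. \<Sum>j\<in>UNIV. \<Sum>k\<in>UNIV. \<Sum>l\<in>UNIV. r i j * r k l *
        (C i k p * \<Phi> q j * \<Phi> s l + \<Phi> p i * C j k q * \<Phi> s l + \<Phi> p i * \<Phi> q k * C j l s)) = 0"
  proof -
    fix p q s
    have "rr br phi r p q s = 0" using ch by simp
    thus "(\<Sum>i\<in>UNIV. \<Sum>j\<in>UNIV. \<Sum>k\<in>UNIV. \<Sum>l\<in>UNIV. r i j * r k l *
        (C i k p * \<Phi> q j * \<Phi> s l + \<Phi> p i * C j k q * \<Phi> s l + \<Phi> p i * \<Phi> q k * C j l s)) = 0"
      by (simp add: rr_def tens3_def sum_fun_apply \<Phi>e Ce)
  qed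
  have dm: "\<And>a j. dual_map phi a j = (\<Sum>p\<in>UNIV. a p * \<Phi> p j)"
    by (simp add: dual_map_def pair_def \<Phi>e)
  have part1: "\<And>x. (rsharp r \<circ> dual_map phi) (dual_map phi x) = phi ((rsharp r \<circ> dual_map phi) x)"
  proof (rule ext)
    fix x m
    have "rsharp r (dual_map phi (dual_map phi x)) m
        = (\<Sum>i\<in>UNIV. \<Sum>p\<in>UNIV. \<Sum>q\<in>UNIV. r i m * x q * \<Phi> q p * \<Phi> p i)"
      by (simp add: rsharp_def dm sum_distrib_left sum_distrib_right mult_ac)
    also have "\<dots> = (\<Sum>q\<in>UNIV. \<Sum>p\<in>UNIV. \<Sum>i\<in>UNIV. r i m * x q * \<Phi> q p * \<Phi> p i)"
      by (rule rev3)
    also have "\<dots> = (\<Sum>q\<in>UNIV. x q * (\<Sum>p\<in>UNIV. \<Phi> q p * (\<Sum>i\<in>UNIV. r i m * \<Phi> p i)))"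
      by (simp add: sum_distrib_left mult_ac)
    also have "\<dots> = (\<Sum>q\<in>UNIV. x q * (\<Sum>p\<in>UNIV. \<Phi> q p * (\<Sum>j\<in>UNIV. r p j * \<Phi> m j)))"
      by (simp only: P)
    also have "\<dots> = (\<Sum>q\<in>UNIV. \<Sum>p\<in>UNIV. \<Sum>j\<in>UNIV. x q * \<Phi> q p * r p j * \<Phi> m j)"
      by (simp add: sum_distrib_left mult_ac)
    also have "\<dots> = (\<Sum>j\<in>UNIV. \<Sum>p\<in>UNIV. \<Sum>q\<in>UNIV. x q * \<Phi> q p * r p j * \<Phi> m j)"
      by (rule rev3)
    also have "\<dots> = phi (rsharp r (dual_map phi x)) m"
      by (simp add: phic rsharp_def dm sum_distrib_left sum_distrib_right mult_ac)
    finally show "((rsharp r \<circ> dual_map phi) (dual_map phi x)) m = phi ((rsharp r \<circ> dual_map phi) x) m"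
      by simp
  qed
  have part2: "\<And>x y. (rsharp r \<circ> dual_map phi) (dual_br Delta x y) = br ((rsharp r \<circ> dual_map phi) x) ((rsharp r \<circ> dual_map phi) y)"
  proof (rule ext)
    fix a b s
    define A where "A = (\<lambda>i. \<Sum>p\<in>UNIV. a p * \<Phi> p i)"
    define B where "B = (\<lambda>i. \<Sum>p\<in>UNIV. b p * \<Phi> p i)"
    define \<alpha> where "\<alpha> = (\<lambda>i k. \<Sum>p\<in>UNIV. a p * C i k p)"
    define \<beta> where "\<beta> = (\<lambda>i k. \<Sum>p\<in>UNIV. b p * C i k p)"
    have D: "\<And>p. dual_br Delta a b p = (\<Sum>i\<in>UNIV. \<Sum>j\<in>UNIV. r i j * (- (\<alpha> i p) * B j - A i * \<beta> j p))"
    proof -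
      fix p
      have "dual_br Delta a b p = (\<Sum>u\<in>UNIV. \<Sum>v\<in>UNIV. \<Sum>i\<in>UNIV. \<Sum>j\<in>UNIV.
           r i j * (C p i u * \<Phi> v j + \<Phi> u i * C p j v) * a u * b v)"
        by (simp add: dual_br_def Dl ad2_def pair2_def tmap_def tens_def sum_fun_apply \<Phi>e Ce
            sum_distrib_left sum_distrib_right distrib_left distrib_right sum.distrib mult_ac)
      also have "\<dots> = (\<Sum>i\<in>UNIV. \<Sum>j\<in>UNIV. \<Sum>u\<in>UNIV. \<Sum>v\<in>UNIV.
           r i j * (C p i u * \<Phi> v j + \<Phi> u i * C p j v) * a u * b v)"
        by (rule swap22)
      also have "\<dots> = (\<Sum>i\<in>UNIV. \<Sum>j\<in>UNIV. r i j * (- (\<alpha> i p) * B j - A i * \<beta> j p))"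
      proof (intro sum.cong refl)
        fix i j
        have e1: "(\<Sum>u\<in>UNIV. a u * C p i u) = - \<alpha> i p"
          by (simp add: \<alpha>_def skC[of p] sum_negf)
        have e2: "(\<Sum>v\<in>UNIV. b v * C p j v) = - \<beta> j p"
          by (simp add: \<beta>_def skC[of p] sum_negf)
        have f1: "(\<Sum>u\<in>UNIV. a u * C p i u) * B j = (\<Sum>u\<in>UNIV. \<Sum>v\<in>UNIV. a u * C p i u * (b v * \<Phi> v j))"
          by (simp only: B_def sum_product)
        have f2: "A i * (\<Sum>v\<in>UNIV. b v * C p j v) = (\<Sum>u\<in>UNIV. \<Sum>v\<in>UNIV. a u * \<Phi> u i * (b v * C p j v))"
          by (simp only: A_def sum_product)
        have "(\<Sum>u\<in>UNIV. \<Sum>v\<in>UNIV. r i j * (C p i u * \<Phi> v j + \<Phi> u i * C p j v) * a u * b v)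
            = r i j * ((\<Sum>u\<in>UNIV. a u * C p i u) * B j + A i * (\<Sum>v\<in>UNIV. b v * C p j v))"
          unfolding f1 f2 by (simp add: sum_distrib_left distrib_left distrib_right sum.distrib mult_ac)
        also have "\<dots> = r i j * (- (\<alpha> i p) * B j - A i * \<beta> j p)"
          by (simp only: e1 e2) simp
        finally show "(\<Sum>u\<in>UNIV. \<Sum>v\<in>UNIV. r i j * (C p i u * \<Phi> v j + \<Phi> u i * C p j v) * a u * b v)
            = r i j * (- (\<alpha> i p) * B j - A i * \<beta> j p)" .
      qed
      finally show "dual_br Delta a b p = (\<Sum>i\<in>UNIV. \<Sum>j\<in>UNIV. r i j * (- (\<alpha> i p) * B j - A i * \<beta> j p))" .
    qed
    have dmA: "dual_map phi a = A" by (rule ext) (simp add: dm A_def)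
    have dmB: "dual_map phi b = B" by (rule ext) (simp add: dm B_def)
    define T1 where "T1 = (\<Sum>i\<in>UNIV. \<Sum>j\<in>UNIV. \<Sum>k\<in>UNIV. \<Sum>l\<in>UNIV. r i j * r k l * (\<alpha> i k * B j * \<Phi> s l))"
    define T2 where "T2 = (\<Sum>i\<in>UNIV. \<Sum>j\<in>UNIV. \<Sum>k\<in>UNIV. \<Sum>l\<in>UNIV. r i j * r k l * (A i * \<beta> j k * \<Phi> s l))"
    define T3 where "T3 = (\<Sum>i\<in>UNIV. \<Sum>j\<in>UNIV. \<Sum>k\<in>UNIV. \<Sum>l\<in>UNIV. r i j * r k l * (A i * B k * C j l s))"
    have "0 = (\<Sum>p\<in>UNIV. \<Sum>q\<in>UNIV. a p * b q * (\<Sum>i\<in>UNIV. \<Sum>j\<in>UNIV. \<Sum>k\<in>UNIV. \<Sum>l\<in>UNIV. r i j * r k l *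
        (C i k p * \<Phi> q j * \<Phi> s l + \<Phi> p i * C j k q * \<Phi> s l + \<Phi> p i * \<Phi> q k * C j l s)))"
      by (simp only: CH mult_zero_right sum.neutral_const)
    also have "\<dots> = (\<Sum>i\<in>UNIV. \<Sum>j\<in>UNIV. \<Sum>k\<in>UNIV. \<Sum>l\<in>UNIV. r i j * r k l * (\<Sum>p\<in>UNIV. \<Sum>q\<in>UNIV. a p * b q *
        (C i k p * \<Phi> q j * \<Phi> s l + \<Phi> p i * C j k q * \<Phi> s l + \<Phi> p i * \<Phi> q k * C j l s)))"
      by (rule G1)
    also have "\<dots> = (\<Sum>i\<in>UNIV. \<Sum>j\<in>UNIV. \<Sum>k\<in>UNIV. \<Sum>l\<in>UNIV. r i j * r k l *
        (\<alpha> i k * B j * \<Phi> s l + A i * \<beta> j k * \<Phi> s l + A i * B k * C j l s))"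
    proof (intro sum.cong refl arg_cong2[where f="(*)"])
      fix i j k l
      have g1: "\<alpha> i k * B j * \<Phi> s l = (\<Sum>p\<in>UNIV. \<Sum>q\<in>UNIV. a p * C i k p * (b q * \<Phi> q j) * \<Phi> s l)"
        by (simp only: \<alpha>_def B_def sum_product, simp only: sum_distrib_right)
      have g2: "A i * \<beta> j k * \<Phi> s l = (\<Sum>p\<in>UNIV. \<Sum>q\<in>UNIV. a p * \<Phi> p i * (b q * C j k q) * \<Phi> s l)"
        by (simp only: A_def \<beta>_def sum_product, simp only: sum_distrib_right)
      have g3: "A i * B k * C j l s = (\<Sum>p\<in>UNIV. \<Sum>q\<in>UNIV. a p * \<Phi> p i * (b q * \<Phi> q k) * C j l s)"
        by (simp only: A_def B_def sum_product, simp only: sum_distrib_right)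
      show "(\<Sum>p\<in>UNIV. \<Sum>q\<in>UNIV. a p * b q *
        (C i k p * \<Phi> q j * \<Phi> s l + \<Phi> p i * C j k q * \<Phi> s l + \<Phi> p i * \<Phi> q k * C j l s))
        = \<alpha> i k * B j * \<Phi> s l + A i * \<beta> j k * \<Phi> s l + A i * B k * C j l s"
        unfolding g1 g2 g3 by (simp add: distrib_left sum.distrib mult_ac)
    qed
    also have "\<dots> = T1 + T2 + T3"
      by (simp add: T1_def T2_def T3_def distrib_left sum.distrib)
    finally have T0: "T1 + T2 + T3 = 0" by simp
    have R: "br (rsharp r (dual_map phi a)) (rsharp r (dual_map phi b)) s = T3"
    proof -
      have "br (rsharp r (dual_map phi a)) (rsharp r (dual_map phi b)) s
          = (\<Sum>x\<in>UNIV. \<Sum>y\<in>UNIV. \<Sum>i\<in>UNIV. \<Sum>k\<in>UNIV. r i x * r k y * (A i * B k * C x y s))"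
        apply (simp only: brc rsharp_def dmA dmB)
        apply (simp only: sum_product)
        apply (simp only: sum_distrib_right)
        apply (simp add: mult_ac)
        done
      also have "\<dots> = T3" unfolding T3_def by (rule perm4a)
      finally show ?thesis .
    qed
    have L: "rsharp r (dual_map phi (dual_br Delta a b)) s = - T1 - T2"
    proof -
      have "rsharp r (dual_map phi (dual_br Delta a b)) s
          = (\<Sum>m\<in>UNIV. \<Sum>p\<in>UNIV. dual_br Delta a b p * (r m s * \<Phi> p m))"
        by (simp add: rsharp_def dm sum_distrib_left mult_ac)
      also have "\<dots> = (\<Sum>p\<in>UNIV. \<Sum>m\<in>UNIV. dual_br Delta a b p * (r m s * \<Phi> p m))"
        by (rule sum.swap)
      also have "\<dots> = (\<Sum>p\<in>UNIV. dual_br Delta a b p * (\<Sum>m\<in>UNIV. r m s * \<Phi> p m))"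
        by (simp add: sum_distrib_left)
      also have "\<dots> = (\<Sum>p\<in>UNIV. dual_br Delta a b p * (\<Sum>l\<in>UNIV. r p l * \<Phi> s l))"
        by (simp only: P)
      also have "\<dots> = (\<Sum>p\<in>UNIV. \<Sum>l\<in>UNIV. \<Sum>i\<in>UNIV. \<Sum>j\<in>UNIV.
            - (r i j * r p l * (\<alpha> i p * B j * \<Phi> s l)) - r i j * r p l * (A i * \<beta> j p * \<Phi> s l))"
        apply (simp only: sum_distrib_left)
        apply (simp only: D sum_distrib_right)
        apply (intro sum.cong refl)
        apply (simp add: algebra_simps)
        done
      also have "\<dots> = (\<Sum>i\<in>UNIV. \<Sum>j\<in>UNIV. \<Sum>p\<in>UNIV. \<Sum>l\<in>UNIV.
            - (r i j * r p l * (\<alpha> i p * B j * \<Phi> s l)) - r i j * r p l * (A i * \<beta> j p * \<Phi> s l))"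
        by (rule swap22)
      also have "\<dots> = - T1 - T2"
        by (simp add: T1_def T2_def sum_subtractf sum_negf)
      finally show ?thesis .
    qed
    show "((rsharp r \<circ> dual_map phi) (dual_br Delta a b)) s
        = br ((rsharp r \<circ> dual_map phi) a) ((rsharp r \<circ> dual_map phi) b) s"
    proof -
      have "T3 = - T1 - T2" using T0 by (simp only: eq_diff_eq eq_neg_iff_add_eq_0) (simp add: add_ac)
      thus ?thesis using L R by simp
    qed
  qed
  show ?thesis unfolding hom_lie_hom_def using part1 part2 by blast
qed

end
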